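(* Let $G$ be a circle of circumference $1$, let $\mathbf{x}\in G^n$ be such that the agents are not on one semicircle, and let $y\in G$. Let $\mathbf{x}\cup\{y\}\in G^{n+1}$ be the profile $\mathbf{x}$ with one additional agent located at $y$. Then $\mathrm{cost}(\mathrm{rc}(\mathbf{x}),y)\ge\mathrm{cost}(\mathrm{rc}(\mathbf{x}\cup\{y\}),y)$.
   Context: $d(x,y)$ is the shorter-arc length; $\hat x$ the antipode of $x$; $\mathrm{cost}(P,y)=\mathbb{E}_{z\sim P}[d(y,z)]$. Agents are on one semicircle if all locations lie in some closed arc of length $1/2$. RC mechanism on a profile $(z_1,\dots,z_m)$ not on one semicircle: the antipodal points $\hat{z}_1,\dots,\hat{z}_m$ partition $G$ into arcs between cyclically consecutive antipodal points; $\mathrm{rc}$ returns the midpoint of each such arc with probability equal to its length. *)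

theory Defs
  imports Complex_Main
begin

text \<open>The circle G of circumference 1 is represented by the half-open interval [0,1),
  a point t standing for the point at arc-length t from a fixed origin (counterclockwise).\<close>

definition G :: "real set" where
  "G = {0..<1}"

definition cdist :: "real \<Rightarrow> real \<Rightarrow> real" where
  "cdist x y = min (frac (x - y)) (1 - frac (x - y))"

definition antipode :: "real \<Rightarrow> real" where
  "antipode x = frac (x + 1/2)"

definition on_one_semicircle :: "real list \<Rightarrow> bool" where
  "on_one_semicircle zs \<longleftrightarrow> (\<exists>a\<in>G. \<forall>z\<in>set zs. frac (z - a) \<le> 1/2)"

text \<open>A finitely supported distribution on G, given as a list of (point, probability) pairs.\<close>
type_synonym fdist = "(real \<times> real) list"

definition cost :: "fdist \<Rightarrow> real \<Rightarrow> real" where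
  "cost P y = (\<Sum>(z, w) \<leftarrow> P. w * cdist y z)"

text \<open>RC mechanism: the distinct antipodal points, sorted, a_0 < ... < a_{k-1}, cut G into the
  arcs [a_i, a_{i+1}] (i < k-1) and the wrap-around arc [a_{k-1}, a_0 + 1].  Each arc contributes
  its midpoint with probability equal to its length.\<close>
definition rc :: "real list \<Rightarrow> fdist" where
  "rc zs = (let A = sorted_list_of_set (antipode ` set zs); k = length A in
     map (\<lambda>i. let s = A ! i; e = (if Suc i < k then A ! Suc i else A ! 0 + 1)
               in (frac ((s + e) / 2), e - s)) [0..<k])"

end

theory Submission
  imports Defs
begin

definition ff :: "real \<Rightarrow> real \<Rightarrow> real \<Rightarrow> real" where
  "ff y s e = (e - s) * cdist y (frac ((s + e) / 2))"

fun chain :: "real \<Rightarrow> real list \<Rightarrow> real" where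
  "chain y (a # b # rest) = ff y a b + chain y (b # rest)"
| "chain y _ = 0"

lemma chain_app: "chain y (xs @ a # ys) = chain y (xs @ [a]) + chain y (a # ys)"
proof (induction xs)
  case Nil then show ?case by simp
next
  case (Cons x xs) then show ?case by (cases xs) auto
qed

lemma chain_idx: "chain y l = (\<Sum>i<length l - 1. ff y (l ! i) (l ! Suc i))"
proof (induction y l rule: chain.induct)
  case (1 y a b rest)
  then show ?case by (simp add: sum.lessThan_Suc_shift del: sum.lessThan_Suc)
qed auto

lemma sls_id: "sorted_wrt (<) (l::real list) \<Longrightarrow> sorted_list_of_set (set l) = l"
  by (metis strict_sorted_equal sorted_list_of_set.strict_sorted_key_list_of_set
      set_sorted_list_of_set finite_set)

lemma cost_rc:
  assumes "sorted_list_of_set (antipode ` set zs) = A" "A \<noteq> []"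
  shows "cost (rc zs) y = chain y (A @ [hd A + 1])"
proof -
  let ?k = "length A"
  have "cost (rc zs) y = (\<Sum>i\<leftarrow>[0..<?k]. ff y (A ! i) (if Suc i < ?k then A ! Suc i else A ! 0 + 1))"
    unfolding cost_def rc_def assms(1) Let_def ff_def
    by (simp add: comp_def case_prod_unfold mult.commute)
  also have "\<dots> = (\<Sum>i<?k. ff y (A ! i) (if Suc i < ?k then A ! Suc i else A ! 0 + 1))"
    by (simp add: sum_list_sum_nth atLeast0LessThan cong: sum.cong)
       (intro sum.cong, auto)
  also have "\<dots> = chain y (A @ [hd A + 1])"
    unfolding chain_idx using assms(2)
    by (intro sum.cong) (auto simp: nth_append hd_conv_nth)
  finally show ?thesis .
qed

lemma cd:
  assumes "frac (y - t) = 1/2" "\<bar>t - z\<bar> < 1/2"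
  shows "cdist y (frac z) = 1/2 - \<bar>t - z\<bar>"
proof -
  have ft: "y - t - of_int \<lfloor>y - t\<rfloor> = 1/2" using assms(1) unfolding frac_def .
  have eq: "y - z = of_int \<lfloor>y - t\<rfloor> + (1/2 + (t - z))"
    using ft by (simp add: algebra_simps)
  have b0: "t - z < 1/2 \<and> - (t - z) < 1/2" using abs_less_iff[THEN iffD1, OF assms(2)] .
  have b: "- (1/2) < t - z \<and> t - z < 1/2" using b0 by linarith
  have "frac (y - z) = frac (1/2 + (t - z))" by (subst eq) (rule frac_add_of_int_left)
  also have "\<dots> = 1/2 + (t - z)"
    using b by (subst frac_eq) linarith
  finally have f: "frac (y - frac z) = 1/2 + (t - z)" by (simp only: frac_diff_simp)
  have "min (1/2 + (t - z)) (1 - (1/2 + (t - z))) = 1/2 - \<bar>t - z\<bar>"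
    by (cases "t - z \<ge> 0") (simp_all add: min_def)
  then show ?thesis unfolding cdist_def f .
qed

lemma key:
  assumes "s < t" "t < e" "t - s < 1" "e - t < 1" "frac (y - t) = 1/2"
  shows "ff y s t + ff y t e \<le> ff y s e"
proof -
  have e1: "\<bar>t - (s + t)/2\<bar> = (t - s)/2" using assms by (simp add: abs_if field_simps)
  have e2: "\<bar>t - (t + e)/2\<bar> = (e - t)/2" using assms by (simp add: abs_if field_simps)
  have e3: "\<bar>t - (s + e)/2\<bar> < 1/2" using assms by (simp add: abs_if field_simps)
  have c1: "cdist y (frac ((s+t)/2)) = 1/2 - (t-s)/2"
    using cd[OF assms(5), of "(s+t)/2"] e1 assms by simp
  have c2: "cdist y (frac ((t+e)/2)) = 1/2 - (e-t)/2"
    using cd[OF assms(5), of "(t+e)/2"] e2 assms by simp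
  have c3: "cdist y (frac ((s+e)/2)) = 1/2 - \<bar>t - (s + e)/2\<bar>"
    using cd[OF assms(5), of "(s+e)/2"] e3 by simp
  have 1: "ff y s t = (t - s) * (1/2 - (t - s)/2)" by (simp only: ff_def c1)
  have 2: "ff y t e = (e - t) * (1/2 - (e - t)/2)" by (simp only: ff_def c2)
  have 3: "ff y s e = (e - s) * (1/2 - \<bar>t - (s + e)/2\<bar>)" by (simp only: ff_def c3)
  define a where "a = t - s"
  define b where "b = e - t"
  have ab: "a > 0" "b > 0" using assms a_def b_def by auto
  have m: "\<bar>t - (s + e)/2\<bar> = \<bar>a - b\<bar> / 2" unfolding a_def b_def by (simp add: abs_if field_simps)
  have es: "e - s = a + b" unfolding a_def b_def by simp
  have ineq: "(a + b) * \<bar>a - b\<bar> \<le> a*a + b*b"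
  proof (cases "a \<ge> b")
    case True
    then have "(a + b) * \<bar>a - b\<bar> = a*a - b*b" by (simp add: algebra_simps)
    moreover have "0 \<le> b*b" by simp
    ultimately show ?thesis by linarith
  next
    case False
    then have "(a + b) * \<bar>a - b\<bar> = b*b - a*a" by (simp add: algebra_simps)
    moreover have "0 \<le> a*a" by simp
    ultimately show ?thesis by linarith
  qed
  have l: "a * (1/2 - a/2) + b * (1/2 - b/2) = (a + b)/2 - (a*a + b*b)/2"
    by (simp add: algebra_simps)
  have r: "(a + b) * (1/2 - \<bar>a - b\<bar> / 2) = (a + b)/2 - (a + b) * \<bar>a - b\<bar>/2"
    by (simp add: right_diff_distrib)
  have "ff y s t + ff y t e = a * (1/2 - a/2) + b * (1/2 - b/2)"
    unfolding 1 2 a_def b_def by simp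
  also have "\<dots> \<le> (a + b) * (1/2 - \<bar>a - b\<bar> / 2)"
    unfolding l r using divide_right_mono[OF ineq, of 2] by simp
  also have "\<dots> = ff y s e" unfolding 3 m es by simp
  finally show ?thesis .
qed

lemma shift_ff: "ff y (c + 1) (a + 1) = ff y c a"
proof -
  have "frac ((c + 1 + (a + 1)) / 2) = frac ((c + a) / 2)"
    using frac_1_eq[of "(c + a) / 2"] by (simp add: add_divide_distrib algebra_simps)
  then show ?thesis unfolding ff_def by simp
qed

lemma antip_half: "frac (y - antipode y) = 1/2" "frac (y - (antipode y + 1)) = 1/2"
proof -
  have "y - antipode y = of_int (\<lfloor>y + 1/2\<rfloor> - 1) + 1/2"
    unfolding antipode_def frac_def by simp
  then show "frac (y - antipode y) = 1/2" by (simp only: frac_add_of_int_left) (simp add: frac_eq)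
  have "y - (antipode y + 1) = of_int (\<lfloor>y + 1/2\<rfloor> - 2) + 1/2"
    unfolding antipode_def frac_def by simp
  then show "frac (y - (antipode y + 1)) = 1/2" by (simp only: frac_add_of_int_left) (simp add: frac_eq)
qed

lemma antip_range: "0 \<le> antipode x" "antipode x < 1"
  unfolding antipode_def by (auto simp: frac_lt_1)

lemma chain2: "chain y [a, b] = ff y a b" by simp

theorem mainTheorem15:
  fixes xs :: "real list" and y :: real
  assumes "set xs \<subseteq> G"
    and "\<not> on_one_semicircle xs"
    and "y \<in> G"
  shows "cost (rc xs) y \<ge> cost (rc (xs @ [y])) y"
proof -
  define S where "S = antipode ` set xs"
  define c where "c = antipode y"
  define A where "A = sorted_list_of_set S"
  define B where "B = sorted_list_of_set (insert c S)"
  have finS: "finite S" unfolding S_def by simp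
  have Sr: "\<And>x. x \<in> S \<Longrightarrow> 0 \<le> x \<and> x < 1" unfolding S_def using antip_range by auto
  have cr: "0 \<le> c" "c < 1" unfolding c_def using antip_range by auto
  have "xs \<noteq> []"
  proof
    assume "xs = []"
    then have "on_one_semicircle xs" unfolding on_one_semicircle_def G_def
      by (intro bexI[of _ 0]) auto
    then show False using assms(2) by simp
  qed
  then have "S \<noteq> {}" unfolding S_def by simp
  then have Ane: "A \<noteq> []" unfolding A_def using finS by simp
  have costA: "cost (rc xs) y = chain y (A @ [hd A + 1])"
    using cost_rc[of xs A y] Ane unfolding A_def S_def by simp
  have SB: "antipode ` set (xs @ [y]) = insert c S" unfolding S_def c_def by auto
  show ?thesis
  proof (cases "c \<in> S")
    case True
    then have e: "antipode ` set (xs @ [y]) = antipode ` set xs" using SB unfolding S_def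
      by (simp only: insert_absorb)
    have "rc (xs @ [y]) = rc xs" unfolding rc_def by (simp only: e)
    then show ?thesis by simp
  next
    case False
    have Bne: "B \<noteq> []" unfolding B_def using finS by simp
    have costB: "cost (rc (xs @ [y])) y = chain y (B @ [hd B + 1])"
    proof -
      have "sorted_list_of_set (antipode ` set (xs @ [y])) = B" unfolding B_def SB ..
      then show ?thesis by (rule cost_rc[OF _ Bne])
    qed
    define L where "L = sorted_list_of_set {x\<in>S. x < c}"
    define R where "R = sorted_list_of_set {x\<in>S. c < x}"
    have setL: "set L = {x\<in>S. x < c}" unfolding L_def using finS by simp
    have setR: "set R = {x\<in>S. c < x}" unfolding R_def using finS by simp
    have sL: "sorted_wrt (<) L" unfolding L_def by simp
    have sR: "sorted_wrt (<) R" unfolding R_def by simp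
    have Lc: "\<And>u. u \<in> set L \<Longrightarrow> u \<in> S \<and> u < c" unfolding setL by simp
    have Rc: "\<And>u. u \<in> set R \<Longrightarrow> u \<in> S \<and> c < u" unfolding setR by simp
    have cross: "\<forall>u\<in>set L. \<forall>v\<in>set R. u < v"
    proof (intro ballI)
      fix u v assume "u \<in> set L" "v \<in> set R"
      then have "u < c" "c < v" using Lc Rc by auto
      then show "u < v" by linarith
    qed
    have cross2: "\<forall>u\<in>set L. \<forall>v\<in>set (c # R). u < v" using cross Lc by simp
    have cR: "\<forall>v\<in>set R. c < v" using Rc by simp
    have s1: "sorted_wrt (<) (L @ R)" using sL sR cross by (simp only: sorted_wrt_append)
    have s2: "set (L @ R) = S"
    proof
      show "set (L @ R) \<subseteq> S" using Lc Rc by auto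
      show "S \<subseteq> set (L @ R)"
      proof
        fix u assume u: "u \<in> S"
        then have "u \<noteq> c" using False by auto
        then have "u < c \<or> c < u" by linarith
        then show "u \<in> set (L @ R)" using u unfolding set_append setL setR by auto
      qed
    qed
    have AL: "A = L @ R" unfolding A_def s2[symmetric] by (rule sls_id[OF s1])
    have s3: "sorted_wrt (<) (L @ c # R)" using sL sR cross2 cR
      by (simp only: sorted_wrt_append sorted_wrt.simps(2))
    have s4: "set (L @ c # R) = insert c S" using s2 by simp
    have BL: "B = L @ c # R" unfolding B_def s4[symmetric] by (rule sls_id[OF s3])
    have key1: "frac (y - c) = 1/2" "frac (y - (c + 1)) = 1/2"
      unfolding c_def using antip_half by auto
    show ?thesis
    proof (cases "L = []")
      case True
      then have RA: "R = A" using AL by simp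
      then obtain a0 R0 where R0: "R = a0 # R0" using Ane by (cases R) auto
      obtain p al where pal: "R = p @ [al]" using Ane RA by (cases R rule: rev_cases) auto
      have a0: "a0 \<in> set R" "al \<in> set R" by (simp add: R0, simp add: pal)
      have hB: "hd B = c" using BL True by simp
      have "chain y (B @ [hd B + 1]) = ff y c a0 + chain y (R @ [c + 1])"
        unfolding hB BL True using R0 by simp
      also have "\<dots> = ff y c a0 + chain y (p @ [al]) + ff y al (c + 1)"
        unfolding pal using chain_app[of y p al "[c + 1]"] by simp
      also have "\<dots> = chain y (p @ [al]) + (ff y al (c + 1) + ff y (c + 1) (a0 + 1))"
        using shift_ff by simp
      also have "\<dots> \<le> chain y (p @ [al]) + ff y al (a0 + 1)"
        using key[of al "c + 1" "a0 + 1" y] key1 a0 setR Sr cr by force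
      also have "\<dots> = chain y (A @ [hd A + 1])"
      proof -
        have hR: "hd R = a0" using R0 by simp
        show ?thesis unfolding RA[symmetric] hR unfolding pal
          using chain_app[of y p al "[a0 + 1]"] by simp
      qed
      finally show ?thesis using costA costB by simp
    next
      case False
      obtain p a where pa: "L = p @ [a]" using False by (cases L rule: rev_cases) auto
      define h where "h = hd L"
      have hA: "hd A = h" "hd B = h" unfolding h_def AL BL using False by auto
      obtain b q where bq: "R @ [h + 1] = b # q" by (cases "R @ [h + 1]") auto
      have aL: "a \<in> set L" "h \<in> set L" unfolding h_def by (simp add: pa, rule hd_in_set[OF False])
      have bprops: "c < b \<and> b - c < 1"
      proof (cases "R = []")
        case True
        then have "b = h + 1" using bq by simp
        moreover have "h \<in> S \<and> h < c" using aL(2) setL by auto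
        moreover have "0 \<le> h" using Sr calculation(2) by blast
        ultimately show ?thesis using cr by linarith
      next
        case False
        then have "b \<in> set R" using bq by (cases R) auto
        then have "b \<in> S \<and> c < b" using setR by auto
        moreover have "b < 1" using Sr calculation by blast
        ultimately show ?thesis using cr by linarith
      qed
      have eA: "A @ [hd A + 1] = p @ a # b # q" unfolding hA unfolding AL pa using bq by simp
      have eB: "B @ [hd B + 1] = p @ a # c # b # q" unfolding hA unfolding BL pa using bq by simp
      have "chain y (B @ [hd B + 1]) = chain y (p @ [a]) + (ff y a c + ff y c b) + chain y (b # q)"
        unfolding eB using chain_app[of y p a "c # b # q"] by simp
      also have "\<dots> \<le> chain y (p @ [a]) + ff y a b + chain y (b # q)"
        using key[of a c b y] key1 bprops aL setL Sr cr by force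
      also have "\<dots> = chain y (A @ [hd A + 1])"
        unfolding eA using chain_app[of y p a "b # q"] by simp
      finally show ?thesis using costA costB by simp
    qed
  qed
qed

end
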